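(* Let $g$ be a positive integer, let $l\ge1$, and let $(a,a+g)$ be a consecutive prospective prime pair with gap $g$ in $S_l$. For $k>l+2$ and $0\le m\le P_k-1$ let $\mathring{n}^g_{S_k^{(m)}}$ be the number of tuples $(m_{l+1},\dots,m_k)$ with $0\le m_j\le P_j-1$ and $m_k=m$ such that, with $M=\sum_{j=l+1}^km_jP_{j-1}\#$, both $a+M$ and $a+g+M$ are coprime to $P_k\#$. Then for all sufficiently large $P_k$ and every $0\le m\le P_k-1$, \[\mathring{n}^g_{S_k^{(m)}}\ge\mathring{n}^g_{k-1}-2\,\mathring{n}^g_{k-2}.\]
   Context: $P_k$ denotes the $k$-th prime ($P_1=2$), $P_k\#=\prod_{i=1}^kP_i$. $S_k=\{N\in\mathbb{N}:5\le N\le4+P_k\#\}$, $S_k^{(m)}=\{N:5+mP_{k-1}\#\le N\le4+(m+1)P_{k-1}\#\}$. A prospective prime in $S_k$ is an $N\in S_k$ coprime to $P_k\#$; prospective primes $a<b$ in $S_k$ are consecutive if no integer strictly between them is coprime to $P_k\#$; a consecutive prospective prime pair with gap $g$ is a pair $(a,a+g)$ of consecutive prospective primes. For $j>l$, $\mathring{n}^g_j=\prod_{i=l+1}^{j}(P_i-2)\prod_{l+1\le i\le j,\,P_i\mid g}\frac{P_i-1}{P_i-2}$. *)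

theory Defs
  imports "HOL-Analysis.Analysis" "HOL-Computational_Algebra.Primes"
begin

text \<open>P k is the k-th prime, P 1 = 2 (P 0 is a junk value).\<close>
definition P :: "nat \<Rightarrow> nat" where
  "P k = enumerate {p::nat. prime p} (k - 1)"

definition primorial :: "nat \<Rightarrow> nat" where
  "primorial k = (\<Prod>i\<in>{1..k}. P i)"

definition S :: "nat \<Rightarrow> nat set" where
  "S k = {N. 5 \<le> N \<and> N \<le> 4 + primorial k}"

definition prospective_prime :: "nat \<Rightarrow> nat \<Rightarrow> bool" where
  "prospective_prime k N \<longleftrightarrow> N \<in> S k \<and> coprime N (primorial k)"

definition consecutive_pp :: "nat \<Rightarrow> nat \<Rightarrow> nat \<Rightarrow> bool" where
  "consecutive_pp k a b \<longleftrightarrow> prospective_prime k a \<and> prospective_prime k b \<and> a < b \<and>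
     (\<forall>N. a < N \<and> N < b \<longrightarrow> \<not> coprime N (primorial k))"

definition cpp_pair :: "nat \<Rightarrow> nat \<Rightarrow> nat \<Rightarrow> bool" where
  "cpp_pair k g a \<longleftrightarrow> consecutive_pp k a (a + g)"

definition ring_n :: "nat \<Rightarrow> nat \<Rightarrow> nat \<Rightarrow> real" where
  "ring_n l g j = (\<Prod>i\<in>{l+1..j}. real (P i) - 2) *
                  (\<Prod>i\<in>{i. l+1 \<le> i \<and> i \<le> j \<and> P i dvd g}. (real (P i) - 1) / (real (P i) - 2))"

definition shiftM :: "nat \<Rightarrow> nat \<Rightarrow> (nat \<Rightarrow> nat) \<Rightarrow> nat" where
  "shiftM l k ms = (\<Sum>j\<in>{l+1..k}. ms j * primorial (j - 1))"

definition ring_n_S :: "nat \<Rightarrow> nat \<Rightarrow> nat \<Rightarrow> nat \<Rightarrow> nat \<Rightarrow> nat" where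
  "ring_n_S l g a k m = card {ms \<in> Pi\<^sub>E {l+1..k} (\<lambda>j. {0..<P j}).
      ms k = m \<and> coprime (a + shiftM l k ms) (primorial k) \<and>
      coprime (a + g + shiftM l k ms) (primorial k)}"

end

theory Submission
  imports Defs
begin


lemma P_prime: "prime (P i)"
proof -
  have "infinite {p::nat. prime p}" by (rule primes_infinite)
  then show ?thesis unfolding P_def using enumerate_in_set by blast
qed

lemma P_mono: "1 \<le> i \<Longrightarrow> i < j \<Longrightarrow> P i < P j"
  proof -
  assume "1 \<le> i" "i < j"
  then have "i - 1 < j - 1" by simp
  then show "P i < P j" unfolding P_def using enumerate_mono primes_infinite by blast
qed

lemma P_ge3: "2 \<le> i \<Longrightarrow> P i \<ge> 3"
proof -
  assume "2 \<le> i"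
  then have "P 1 < P i" using P_mono[of 1 i] by simp
  moreover have "P 1 \<ge> 2" using P_prime prime_ge_2_nat by blast
  ultimately show ?thesis by simp
qed


lemma P_coprime_prim:
  assumes "1 \<le> j" "i < j"
  shows "coprime (P j) (primorial i)"
  unfolding primorial_def
proof (rule prod_coprime_right)
  fix t assume "t \<in> {1..i}"
  then have "P t < P j" using P_mono[of t j] assms by simp
  then have "P t \<noteq> P j" by simp
  then show "coprime (P j) (P t)" using primes_coprime[OF P_prime P_prime] by metis
qed

lemma prim_Suc: "primorial (Suc j) = primorial j * P (Suc j)"
  unfolding primorial_def by (simp add: prod.cl_ivl_Suc)



lemma uniq_mod:
  fixes p q d y1 y2 :: nat
  assumes "prime p" "\<not> p dvd q" "y1 < p" "y2 < p" "(d + y1*q) mod p = (d+y2*q) mod p"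
  shows "y1 = y2"
proof -
  have key: "y1 = y2" if "y1 \<le> y2" "(d + y1*q) mod p = (d+y2*q) mod p" "y1 < p" "y2 < p" for y1 y2
  proof -
    have le: "d + y2*q \<ge> d + y1*q" using that(1) by (simp add: mult_le_mono1)
    have "(d + y2*q) mod p = (d + y1*q) mod p" using that(2) by (rule sym)
    then have "p dvd (d + y2*q) - (d + y1*q)" using mod_eq_dvd_iff_nat[OF le, of p] by blast
    moreover have "(d + y2*q) - (d + y1*q) = (y2 - y1) * q" by (simp add: diff_mult_distrib)
    ultimately have "p dvd (y2 - y1) * q" by simp
    then have "p dvd y2 - y1" using assms(1,2) prime_dvd_mult_iff by blast
    moreover have "y2 - y1 < p" using that by linarith
    ultimately have "y2 - y1 = 0" using nat_dvd_not_less by blast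
    then show ?thesis using that by linarith
  qed
  show ?thesis
  proof (cases "y1 \<le> y2")
    case True then show ?thesis using key assms by blast
  next
    case False then show ?thesis using key[of y2 y1] assms by simp
  qed
qed
lemma uniq_dvd:
  fixes p q d y1 y2 :: nat
  assumes "prime p" "\<not> p dvd q" "y1 < p" "y2 < p" "p dvd d + y1*q" "p dvd d + y2*q"
  shows "y1 = y2"
proof -
  have "(d+y1*q) mod p = 0" "(d+y2*q) mod p = 0" using assms(5,6) by (simp_all add: dvd_eq_mod_eq_0)
  then have "(d+y1*q) mod p = (d+y2*q) mod p" by simp
  then show ?thesis by (rule uniq_mod[OF assms(1-4)])
qed

lemma exists_dvd:
  fixes p q d :: nat
  assumes "prime p" "\<not> p dvd q"
  shows "\<exists>x<p. p dvd d + x*q"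
proof -
  let ?f = "\<lambda>x. (d + x*q) mod p"
  have p0: "p > 0" using assms prime_gt_0_nat by blast
  have inj: "inj_on ?f {0..<p}"
  proof (rule inj_onI)
    fix x y assume "x \<in> {0..<p}" "y \<in> {0..<p}" "?f x = ?f y"
    then show "x = y" using uniq_mod[OF assms, of x y d] by simp
  qed
  have sub: "?f ` {0..<p} \<subseteq> {0..<p}" using p0 by auto
  have "card (?f ` {0..<p}) = card {0..<p}" using card_image[OF inj] by simp
  then have "?f ` {0..<p} = {0..<p}" using card_subset_eq[OF _ sub] by blast
  then have "0 \<in> ?f ` {0..<p}" using p0 by auto
  then show ?thesis by (auto simp: dvd_eq_mod_eq_0)
qed


lemma count_good:
  fixes p q d g :: nat
  assumes "prime p" "\<not> p dvd q"
  shows "card {x\<in>{0..<p}. \<not> p dvd (d + x*q) \<and> \<not> p dvd (d + g + x*q)}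
         = (if p dvd g then p - 1 else p - 2)"
proof -
  obtain x1 where x1: "x1 < p" "p dvd d + x1*q" using exists_dvd[OF assms] by blast
  obtain x2 where x2: "x2 < p" "p dvd (d + g) + x2*q" using exists_dvd[OF assms] by blast
  have eq: "{x\<in>{0..<p}. \<not> p dvd (d + x*q) \<and> \<not> p dvd (d + g + x*q)} = {0..<p} - {x1, x2}"
  proof -
    have "x \<in> {0..<p} \<Longrightarrow> p dvd (d + x*q) \<longleftrightarrow> x = x1" for x
      using uniq_dvd[OF assms] x1 by auto
    moreover have "x \<in> {0..<p} \<Longrightarrow> p dvd (d + g + x*q) \<longleftrightarrow> x = x2" for x
      using uniq_dvd[OF assms, of _ _ "d+g"] x2 by auto
    ultimately show ?thesis by auto
  qed
  have "x1 = x2 \<longleftrightarrow> p dvd g"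
  proof
    assume "x1 = x2"
    then have "p dvd (d + g + x1*q) - (d + x1*q)" using x1 x2 dvd_diff_nat by blast
    then show "p dvd g" by simp
  next
    assume "p dvd g"
    have "d + g + x1*q = (d + x1*q) + g" by simp
    then have "p dvd d + g + x1*q" using x1(2) \<open>p dvd g\<close> by (simp only: dvd_add)
    then show "x1 = x2" using uniq_dvd[OF assms x1(1) x2(1)] x2 by simp
  qed
  show ?thesis
  proof (cases "p dvd g")
    case True
    then have "{x1, x2} = {x1}" using \<open>x1 = x2 \<longleftrightarrow> p dvd g\<close> by simp
    then have "card ({0..<p} - {x1, x2}) = p - 1" using x1(1) by simp
    then show ?thesis unfolding eq using True by simp
  next
    case False
    then have ne: "x1 \<noteq> x2" using \<open>x1 = x2 \<longleftrightarrow> p dvd g\<close> by simp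
    have "card ({0..<p} - {x1, x2}) = card {0..<p} - card {x1, x2}"
      using x1(1) x2(1) by (intro card_Diff_subset) auto
    also have "\<dots> = p - 2" using ne by simp
    finally show ?thesis unfolding eq using False by simp
  qed
qed


lemma coprime_add_multQ: "coprime (c + x * Q) Q \<longleftrightarrow> coprime c (Q::nat)"
proof (induction x)
  case 0 then show ?case by simp
next
  case (Suc x)
  have "c + Suc x * Q = (c + x*Q) + Q" by simp
  then have "gcd (c + Suc x * Q) Q = gcd ((c + x*Q) + Q) Q" by (simp only:)
  also have "\<dots> = gcd (c + x*Q) Q" by (rule gcd_add1)
  finally show ?case using Suc by (simp add: coprime_iff_gcd_eq_1)
qed

lemma coprime_prime_iff: "prime (p::nat) \<Longrightarrow> coprime n p \<longleftrightarrow> \<not> p dvd n"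
proof
  assume "prime p" "coprime n p"
  then show "\<not> p dvd n" using coprime_common_divisor_nat[of n p p] prime_gt_1_nat by auto
next
  assume "prime p" "\<not> p dvd n"
  then show "coprime n p" using prime_imp_coprime coprime_commute by blast
qed

definition G :: "nat \<Rightarrow> nat \<Rightarrow> nat \<Rightarrow> nat \<Rightarrow> (nat \<Rightarrow> nat) set" where
  "G l g a j = {ms \<in> Pi\<^sub>E {l+1..j} (\<lambda>i. {0..<P i}).
      coprime (a + shiftM l j ms) (primorial j) \<and> coprime (a + g + shiftM l j ms) (primorial j)}"

definition good :: "nat \<Rightarrow> nat \<Rightarrow> nat \<Rightarrow> nat \<Rightarrow> (nat \<Rightarrow> nat) \<Rightarrow> nat set" where
  "good l g a j ms = {x \<in> {0..<P (Suc j)}. \<not> P (Suc j) dvd (a + shiftM l j ms + x * primorial j)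
      \<and> \<not> P (Suc j) dvd (a + shiftM l j ms + g + x * primorial j)}"

lemma shiftM_cong: "(\<And>i. i \<in> {l+1..j} \<Longrightarrow> ms i = ms' i) \<Longrightarrow> shiftM l j ms = shiftM l j ms'"
  unfolding shiftM_def by (rule sum.cong) auto

lemma shiftM_Suc: "l \<le> j \<Longrightarrow> shiftM l (Suc j) ms = shiftM l j ms + ms (Suc j) * primorial j"
  unfolding shiftM_def by (simp add: sum.cl_ivl_Suc)

lemma shiftM_upd: "l \<le> j \<Longrightarrow> shiftM l (Suc j) (ms(Suc j := x)) = shiftM l j ms + x * primorial j"
proof -
  assume "l \<le> j"
  then have "shiftM l (Suc j) (ms(Suc j := x)) = shiftM l j (ms(Suc j := x)) + x * primorial j"
    by (simp add: shiftM_Suc)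
  moreover have "shiftM l j (ms(Suc j := x)) = shiftM l j ms" by (rule shiftM_cong) auto
  ultimately show ?thesis by simp
qed

lemma coprime_step:
  assumes "1 \<le> l" "l \<le> j"
  shows "coprime (c + x * primorial j) (primorial (Suc j)) \<longleftrightarrow>
         coprime c (primorial j) \<and> \<not> P (Suc j) dvd (c + x * primorial j)"
  using coprime_add_multQ[of c x "primorial j"] coprime_prime_iff[OF P_prime[of "Suc j"], of "c + x * primorial j"]
  by (simp add: prim_Suc)

lemma upd_in_G:
  assumes "1 \<le> l" "l \<le> j" "ms \<in> Pi\<^sub>E {l+1..j} (\<lambda>i. {0..<P i})"
  shows "ms(Suc j := x) \<in> G l g a (Suc j) \<longleftrightarrow> ms \<in> G l g a j \<and> x \<in> good l g a j ms"
proof -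
  have pe: "ms(Suc j := x) \<in> Pi\<^sub>E {l+1..Suc j} (\<lambda>i. {0..<P i}) \<longleftrightarrow> x < P (Suc j)"
    using assms(2,3) by (auto simp: PiE_def Pi_def extensional_def)
  have e1: "a + shiftM l (Suc j) (ms(Suc j := x)) = (a + shiftM l j ms) + x * primorial j"
    using shiftM_upd[OF assms(2)] by simp
  have e2: "a + g + shiftM l (Suc j) (ms(Suc j := x)) = (a + shiftM l j ms + g) + x * primorial j"
    using shiftM_upd[OF assms(2)] by simp
  show ?thesis
    unfolding G_def good_def mem_Collect_eq e1 e2 coprime_step[OF assms(1,2)] pe
    using assms(3) by (auto simp: add.assoc add.commute add.left_commute)
qed

lemma card_good:
  assumes "1 \<le> l" "l \<le> j"
  shows "card (good l g a j ms) = (if P (Suc j) dvd g then P (Suc j) - 1 else P (Suc j) - 2)"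
proof -
  have "coprime (P (Suc j)) (primorial j)" by (rule P_coprime_prim) auto
  then have "coprime (primorial j) (P (Suc j))" using coprime_commute by blast
  then have "\<not> P (Suc j) dvd primorial j" using coprime_prime_iff[OF P_prime] by blast
  then show ?thesis unfolding good_def
    using count_good[OF P_prime, of "Suc j" "primorial j" "a + shiftM l j ms" g] by simp
qed



lemma G_finite: "finite (G l g a j)"
proof -
  have "G l g a j \<subseteq> Pi\<^sub>E {l+1..j} (\<lambda>i. {0..<P i})" unfolding G_def by blast
  moreover have "finite (Pi\<^sub>E {l+1..j} (\<lambda>i. {0..<P i}))" by (rule finite_PiE) auto
  ultimately show ?thesis by (rule finite_subset)
qed

lemma decomp:
  assumes "l \<le> j" "ms \<in> Pi\<^sub>E {l+1..Suc j} (\<lambda>i. {0..<P i})"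
  shows "restrict ms {l+1..j} \<in> Pi\<^sub>E {l+1..j} (\<lambda>i. {0..<P i})"
    and "ms = (restrict ms {l+1..j})(Suc j := ms (Suc j))"
    and "ms (Suc j) < P (Suc j)"
proof -
  show "restrict ms {l+1..j} \<in> Pi\<^sub>E {l+1..j} (\<lambda>i. {0..<P i})"
    using assms by (auto simp: PiE_def Pi_def)
  show "ms = (restrict ms {l+1..j})(Suc j := ms (Suc j))"
  proof (rule ext)
    fix t
    show "ms t = ((restrict ms {l+1..j})(Suc j := ms (Suc j))) t"
    proof (cases "t \<in> {l+1..Suc j}")
      case True then show ?thesis by auto
    next
      case False
      then have "ms t = undefined" using assms(2) by (auto simp: PiE_def extensional_def)
      then show ?thesis using False by auto
    qed
  qed
  show "ms (Suc j) < P (Suc j)" using assms by (auto simp: PiE_def Pi_def)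
qed

lemma G_base:
  assumes "coprime a (primorial l)" "coprime (a + g) (primorial l)"
  shows "G l g a l = {\<lambda>_. undefined}"
proof -
  have e: "{l+1..l} = {}" by simp
  have "shiftM l l ms = 0" for ms unfolding shiftM_def by simp
  then show ?thesis unfolding G_def e using assms by auto
qed

lemma ring_n_base: "ring_n l g l = 1"
proof -
  have e: "{i. l+1 \<le> i \<and> i \<le> l \<and> P i dvd g} = {}" by auto
  show ?thesis unfolding ring_n_def e by simp
qed

lemma alg_helper: "(c::real) \<noteq> 0 \<Longrightarrow> (X * c) * (d / c * Y) = (X * Y) * d"
  by simp

lemma ring_n_Suc:
  assumes "1 \<le> l" "l \<le> j"
  shows "ring_n l g (Suc j) = ring_n l g j * real (if P (Suc j) dvd g then P (Suc j) - 1 else P (Suc j) - 2)"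
proof -
  let ?p = "P (Suc j)"
  have p3: "?p \<ge> 3" using P_ge3[of "Suc j"] assms by simp
  have A: "(\<Prod>i\<in>{l+1..Suc j}. real (P i) - 2) = (\<Prod>i\<in>{l+1..j}. real (P i) - 2) * (real ?p - 2)"
    using assms by (simp add: prod.cl_ivl_Suc)
  let ?D = "\<lambda>j. {i. l+1 \<le> i \<and> i \<le> j \<and> P i dvd g}"
  have fin: "finite (?D j)" by (rule finite_subset[of _ "{l+1..j}"]) auto
  show ?thesis
  proof (cases "?p dvd g")
    case True
    have "?D (Suc j) = insert (Suc j) (?D j)" using True assms by auto
    moreover have "Suc j \<notin> ?D j" by simp
    ultimately have "(\<Prod>i\<in>?D (Suc j). (real (P i) - 1) / (real (P i) - 2))
        = (real ?p - 1) / (real ?p - 2) * (\<Prod>i\<in>?D j. (real (P i) - 1) / (real (P i) - 2))"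
      using fin by simp
    moreover have "real (?p - 1) = real ?p - 1" using p3 by simp
    moreover have "real ?p - 2 \<noteq> 0" using p3 by simp
    ultimately show ?thesis unfolding ring_n_def A using True alg_helper by simp
  next
    case False
    have D: "?D (Suc j) = ?D j" using False by (auto simp: le_Suc_eq)
    have r: "real (?p - 2) = real ?p - 2" using p3 by simp
    show ?thesis unfolding ring_n_def A D using False r by (simp add: mult_ac)
  qed
qed

lemma card_G_Suc:
  assumes "1 \<le> l" "l \<le> j"
  shows "card (G l g a (Suc j)) = card (G l g a j) * (if P (Suc j) dvd g then P (Suc j) - 1 else P (Suc j) - 2)"
proof -
  let ?f = "\<lambda>(ms, x). ms(Suc j := x)"
  let ?S = "SIGMA ms:G l g a j. good l g a j ms"
  have GP: "G l g a j \<subseteq> Pi\<^sub>E {l+1..j} (\<lambda>i. {0..<P i})" unfolding G_def by blast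
  have GP': "G l g a (Suc j) \<subseteq> Pi\<^sub>E {l+1..Suc j} (\<lambda>i. {0..<P i})" unfolding G_def by blast
  have inj: "inj_on ?f ?S"
  proof (rule inj_onI)
    fix u v assume u: "u \<in> ?S" and v: "v \<in> ?S" and e: "?f u = ?f v"
    obtain ms1 x1 where u1: "u = (ms1, x1)" by fastforce
    obtain ms2 x2 where v1: "v = (ms2, x2)" by fastforce
    have m1: "ms1 \<in> Pi\<^sub>E {l+1..j} (\<lambda>i. {0..<P i})" using u u1 GP by auto
    have m2: "ms2 \<in> Pi\<^sub>E {l+1..j} (\<lambda>i. {0..<P i})" using v v1 GP by auto
    have e': "ms1(Suc j := x1) = ms2(Suc j := x2)" using e u1 v1 by simp
    have "x1 = x2" using fun_cong[OF e', of "Suc j"] by simp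
    moreover have "ms1 = ms2"
    proof (rule ext)
      fix t show "ms1 t = ms2 t"
      proof (cases "t = Suc j")
        case True
        then have "t \<notin> {l+1..j}" by simp
        then show ?thesis using m1 m2 True by (simp add: PiE_def extensional_def)
      next
        case False then show ?thesis using fun_cong[OF e', of t] by simp
      qed
    qed
    ultimately show "u = v" using u1 v1 by simp
  qed
  have img: "?f ` ?S = G l g a (Suc j)"
  proof
    show "?f ` ?S \<subseteq> G l g a (Suc j)"
    proof
      fix w assume "w \<in> ?f ` ?S"
      then obtain ms x where "ms \<in> G l g a j" "x \<in> good l g a j ms" "w = ms(Suc j := x)" by auto
      then show "w \<in> G l g a (Suc j)" using upd_in_G[OF assms] GP by blast
    qed
    show "G l g a (Suc j) \<subseteq> ?f ` ?S"
    proof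
      fix w assume w: "w \<in> G l g a (Suc j)"
      then have wP: "w \<in> Pi\<^sub>E {l+1..Suc j} (\<lambda>i. {0..<P i})" using GP' by blast
      note d = decomp[OF assms(2) wP]
      have "w = (restrict w {l+1..j})(Suc j := w (Suc j))" by (rule d(2))
      then have "restrict w {l+1..j} \<in> G l g a j \<and> w (Suc j) \<in> good l g a j (restrict w {l+1..j})"
        using upd_in_G[OF assms d(1)] w by metis
      then have "(restrict w {l+1..j}, w (Suc j)) \<in> ?S" by simp
      moreover have "w = ?f (restrict w {l+1..j}, w (Suc j))" using d(2) by simp
      ultimately show "w \<in> ?f ` ?S" by blast
    qed
  qed
  have fin: "finite ?S"
    using G_finite by (intro finite_SigmaI) (auto simp: good_def)
  have "card (G l g a (Suc j)) = card ?S" using card_image[OF inj] img by simp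
  also have "\<dots> = (\<Sum>ms\<in>G l g a j. card (good l g a j ms))"
    using G_finite by (intro card_SigmaI) (auto simp: good_def)
  also have "\<dots> = card (G l g a j) * (if P (Suc j) dvd g then P (Suc j) - 1 else P (Suc j) - 2)"
    using card_good[OF assms] by simp
  finally show ?thesis .
qed

lemma card_G:
  assumes "1 \<le> l" "coprime a (primorial l)" "coprime (a + g) (primorial l)" "l \<le> j"
  shows "real (card (G l g a j)) = ring_n l g j"
  using assms(4)
proof (induction j rule: dec_induct)
  case base
  then show ?case using G_base[OF assms(2,3)] ring_n_base by simp
next
  case (step j)
  then show ?case using card_G_Suc[OF assms(1) step(1)] ring_n_Suc[OF assms(1) step(1)] by simp
qed



lemma B_bound:
  assumes "1 \<le> l" "l \<le> i"
  shows "card {ms \<in> G l g a (Suc i). P (Suc (Suc i)) dvd c + shiftM l (Suc i) ms} \<le> card (G l g a i)"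
proof -
  let ?B = "{ms \<in> G l g a (Suc i). P (Suc (Suc i)) dvd c + shiftM l (Suc i) ms}"
  let ?h = "\<lambda>ms. restrict ms {l+1..i}"
  let ?p = "P (Suc (Suc i))"
  have GP': "G l g a (Suc i) \<subseteq> Pi\<^sub>E {l+1..Suc i} (\<lambda>i. {0..<P i})" unfolding G_def by blast
  have ndvd: "\<not> ?p dvd primorial i"
  proof -
    have "coprime ?p (primorial i)" by (rule P_coprime_prim) auto
    then have "coprime (primorial i) ?p" using coprime_commute by blast
    then show ?thesis using coprime_prime_iff[OF P_prime] by blast
  qed
  have pl: "P (Suc i) < ?p" using P_mono[of "Suc i" "Suc (Suc i)"] by simp
  have key: "?h ms \<in> G l g a i \<and> ms = (?h ms)(Suc i := ms (Suc i)) \<and> ms (Suc i) < ?p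
       \<and> shiftM l (Suc i) ms = shiftM l i (?h ms) + ms (Suc i) * primorial i"
    if "ms \<in> G l g a (Suc i)" for ms
  proof -
    have wP: "ms \<in> Pi\<^sub>E {l+1..Suc i} (\<lambda>i. {0..<P i})" using that GP' by blast
    note d = decomp[OF assms(2) wP]
    have "?h ms \<in> G l g a i" using upd_in_G[OF assms d(1)] that d(2) by metis
    moreover have "shiftM l (Suc i) ms = shiftM l i (?h ms) + ms (Suc i) * primorial i"
      using shiftM_upd[OF assms(2), of "?h ms" "ms (Suc i)"] d(2) by metis
    ultimately show ?thesis using d(2,3) pl by simp
  qed
  have inj: "inj_on ?h ?B"
  proof (rule inj_onI)
    fix u v assume u: "u \<in> ?B" and v: "v \<in> ?B" and e: "?h u = ?h v"
    have ku: "?h u \<in> G l g a i \<and> u = (?h u)(Suc i := u (Suc i)) \<and> u (Suc i) < ?p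
       \<and> shiftM l (Suc i) u = shiftM l i (?h u) + u (Suc i) * primorial i" using key u by blast
    have kv: "?h v \<in> G l g a i \<and> v = (?h v)(Suc i := v (Suc i)) \<and> v (Suc i) < ?p
       \<and> shiftM l (Suc i) v = shiftM l i (?h v) + v (Suc i) * primorial i" using key v by blast
    have du: "?p dvd (c + shiftM l i (?h u)) + u (Suc i) * primorial i"
      using u ku by (simp add: add.assoc)
    have dv: "?p dvd (c + shiftM l i (?h u)) + v (Suc i) * primorial i"
      using v kv e by (simp add: add.assoc)
    have "u (Suc i) = v (Suc i)"
      using uniq_dvd[OF P_prime ndvd, of "u (Suc i)" "v (Suc i)"] ku kv du dv by blast
    then show "u = v" using ku kv e by metis
  qed
  have "?h ` ?B \<subseteq> G l g a i" using key by blast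
  then show ?thesis using card_inj_on_le[OF inj _ G_finite] by blast
qed

theorem corollary1:
  fixes g l a :: nat
  assumes "g > 0" and "l \<ge> 1" and "cpp_pair l g a"
  shows "\<exists>N. \<forall>k m. k > l + 2 \<and> P k \<ge> N \<and> m \<le> P k - 1 \<longrightarrow>
           real (ring_n_S l g a k m) \<ge> ring_n l g (k - 1) - 2 * ring_n l g (k - 2)"
proof (intro exI allI impI)
  fix k m assume km: "k > l + 2 \<and> P k \<ge> 0 \<and> m \<le> P k - 1"
  have ca: "coprime a (primorial l)" "coprime (a + g) (primorial l)"
    using assms(3) unfolding cpp_pair_def consecutive_pp_def prospective_prime_def by auto
  obtain i where ki: "k = Suc (Suc i)" and il: "l + 1 \<le> i" using km
    by (metis add_2_eq_Suc' less_imp_Suc_add add.commute add_Suc_right le_add1 Suc_eq_plus1)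
  define j where "j = Suc i"
  have lj: "l \<le> j" "l \<le> i" using il j_def by auto
  have l1: "1 \<le> l" using assms(2) .
  have "P k \<ge> 2" using P_prime prime_ge_2_nat by blast
  moreover have "m \<le> P k - 1" using km by blast
  ultimately have "m < P k" by arith
  then have mP: "m < P (Suc j)" using ki j_def by simp
  let ?T = "{ms \<in> G l g a (Suc j). ms (Suc j) = m}"
  have T: "ring_n_S l g a k m = card ?T"
    unfolding ring_n_S_def G_def ki j_def by (intro arg_cong[where f=card] Collect_cong) blast
  let ?A = "{ms \<in> G l g a j. m \<in> good l g a j ms}"
  let ?B1 = "{ms \<in> G l g a j. P (Suc j) dvd (a + m * primorial j) + shiftM l j ms}"
  let ?B2 = "{ms \<in> G l g a j. P (Suc j) dvd (a + g + m * primorial j) + shiftM l j ms}"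
  have GP: "G l g a j \<subseteq> Pi\<^sub>E {l+1..j} (\<lambda>i. {0..<P i})" unfolding G_def by blast
  have finT: "finite ?T" using G_finite by simp
  have "inj_on (\<lambda>ms. ms(Suc j := m)) ?A"
  proof (rule inj_onI)
    fix u v assume u: "u \<in> ?A" and v: "v \<in> ?A" and e: "u(Suc j := m) = v(Suc j := m)"
    have "u \<in> Pi\<^sub>E {l+1..j} (\<lambda>i. {0..<P i})" "v \<in> Pi\<^sub>E {l+1..j} (\<lambda>i. {0..<P i})"
      using u v GP by auto
    then have uv: "u (Suc j) = v (Suc j)" by (simp add: PiE_def extensional_def)
    have "u = (u(Suc j := m))(Suc j := u (Suc j))" by simp
    also have "\<dots> = (v(Suc j := m))(Suc j := v (Suc j))" using e uv by simp
    also have "\<dots> = v" by simp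
    finally show "u = v" .
  qed
  moreover have "(\<lambda>ms. ms(Suc j := m)) ` ?A \<subseteq> ?T"
  proof
    fix w assume "w \<in> (\<lambda>ms. ms(Suc j := m)) ` ?A"
    then obtain ms where ms: "ms \<in> G l g a j" "m \<in> good l g a j ms" and w: "w = ms(Suc j := m)" by blast
    have "ms \<in> Pi\<^sub>E {l+1..j} (\<lambda>i. {0..<P i})" using ms(1) GP by blast
    then have "ms(Suc j := m) \<in> G l g a (Suc j)" using upd_in_G[OF l1 lj(1)] ms by blast
    then show "w \<in> ?T" using w by simp
  qed
  ultimately have c1: "card ?A \<le> card ?T" using card_inj_on_le[OF _ _ finT] by blast
  have "G l g a j \<subseteq> ?A \<union> (?B1 \<union> ?B2)"
  proof
    fix ms assume ms: "ms \<in> G l g a j"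
    show "ms \<in> ?A \<union> (?B1 \<union> ?B2)"
    proof (cases "ms \<in> ?B1 \<union> ?B2")
      case True then show ?thesis by blast
    next
      case False
      have e1: "a + shiftM l j ms + m * primorial j = (a + m * primorial j) + shiftM l j ms" by simp
      have e2: "a + shiftM l j ms + g + m * primorial j = (a + g + m * primorial j) + shiftM l j ms" by simp
      have n1: "\<not> P (Suc j) dvd (a + m * primorial j) + shiftM l j ms" using False ms by blast
      have n2: "\<not> P (Suc j) dvd (a + g + m * primorial j) + shiftM l j ms" using False ms by blast
      have n1': "\<not> P (Suc j) dvd a + shiftM l j ms + m * primorial j" using n1 unfolding e1 .
      have n2': "\<not> P (Suc j) dvd a + shiftM l j ms + g + m * primorial j" using n2 unfolding e2 .
      have "m \<in> good l g a j ms" unfolding good_def using mP n1' n2' by simp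
      then show ?thesis using ms by blast
    qed
  qed
  then have "card (G l g a j) \<le> card (?A \<union> (?B1 \<union> ?B2))"
    using G_finite by (intro card_mono) auto
  moreover have "card (?A \<union> (?B1 \<union> ?B2)) \<le> card ?A + card (?B1 \<union> ?B2)" by (rule card_Un_le)
  moreover have "card (?B1 \<union> ?B2) \<le> card ?B1 + card ?B2" by (rule card_Un_le)
  ultimately have c2: "card (G l g a j) \<le> card ?A + card ?B1 + card ?B2" by linarith
  have b1: "card ?B1 \<le> card (G l g a i)" unfolding j_def by (rule B_bound[OF l1 lj(2)])
  have b2: "card ?B2 \<le> card (G l g a i)" unfolding j_def by (rule B_bound[OF l1 lj(2)])
  have r1: "real (card (G l g a j)) = ring_n l g (k - 1)"
    using card_G[OF l1 ca lj(1)] ki j_def by simp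
  have r2: "real (card (G l g a i)) = ring_n l g (k - 2)"
    using card_G[OF l1 ca lj(2)] ki by simp
  have "card (G l g a j) \<le> card ?T + 2 * card (G l g a i)" using c1 c2 b1 b2 by linarith
  then have "real (card (G l g a j)) \<le> real (card ?T + 2 * card (G l g a i))" by (rule of_nat_mono)
  also have "\<dots> = real (card ?T) + 2 * real (card (G l g a i))" by simp
  finally show "real (ring_n_S l g a k m) \<ge> ring_n l g (k - 1) - 2 * ring_n l g (k - 2)"
    using T r1 r2 by simp
qed

end
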